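(* Let $g>0$, let $\hat\nu:\mathbb R\to[\nu_0,\nu_1]$ be a stretch-limiting constitutive function as in the context, and let $a>0$, $b\in\mathbb R$ with $a^2+b^2<\nu_0^2$. Let $\gamma_n>0$ with $\gamma_n\to0$, and for each $n$ let $\lambda_n<0$, $\mu_n\in\mathbb R$ satisfy $$a\mathbf i+b\mathbf k=\int_0^1\frac{\hat\nu(-\delta_n(s))}{-\delta_n(s)}\big(\lambda_n\mathbf i+(\mu_n+g\gamma_n s)\mathbf k\big)\,ds,\qquad \delta_n(s)=\sqrt{\lambda_n^2+(\mu_n+g\gamma_n s)^2}.$$ Then $\lim_{n\to\infty}\sqrt{\lambda_n^2+\mu_n^2}=0$.
   Context: Stretch-limited constitutive function: constants $N_0<0<N_1$, $0<\nu_0<1<\nu_1$ with $\hat\nu(N)=\nu_0$ for $N\le N_0$, $\hat\nu(N)=\nu_1$ for $N\ge N_1$, $\hat\nu\in C^\infty([N_0,N_1];[\nu_0,\nu_1])$, $\hat\nu(0)=1$, $\hat\nu'\ge c>0$ on $[N_0,N_1]$. The equation describes a compressive uniform catenary with mass $\gamma_n$ per unit reference length and supports at $\mathbf 0$ and $a\mathbf i+b\mathbf k$. *)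

theory Defs
  imports "HOL-Analysis.Analysis"
begin

definition smooth_on_interval :: "(real \<Rightarrow> real) \<Rightarrow> real \<Rightarrow> real \<Rightarrow> (nat \<Rightarrow> real \<Rightarrow> real) \<Rightarrow> bool" where
  "smooth_on_interval f a b D \<longleftrightarrow>
     (\<forall>x\<in>{a..b}. D 0 x = f x) \<and>
     (\<forall>k. \<forall>x\<in>{a..b}. (D k has_real_derivative D (Suc k) x) (at x within {a..b}))"

definition stretch_limiting ::
  "(real \<Rightarrow> real) \<Rightarrow> real \<Rightarrow> real \<Rightarrow> real \<Rightarrow> real \<Rightarrow> bool" where
  "stretch_limiting nu N0 N1 nu0 nu1 \<longleftrightarrow>
     N0 < 0 \<and> 0 < N1 \<and> 0 < nu0 \<and> nu0 < 1 \<and> 1 < nu1 \<and>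
     (\<forall>N\<le>N0. nu N = nu0) \<and> (\<forall>N\<ge>N1. nu N = nu1) \<and>
     (\<forall>N\<in>{N0..N1}. nu N \<in> {nu0..nu1}) \<and>
     nu 0 = 1 \<and>
     (\<exists>D c. smooth_on_interval nu N0 N1 D \<and> c > 0 \<and> (\<forall>N\<in>{N0..N1}. D 1 N \<ge> c))"

end

theory Submission imports Defs begin
lemma pw:
  fixes l m h s r d nv nu0 :: real
  assumes l: "l<0" and h: "h>0" and s: "0\<le>s" "s\<le>1" and r: "r = sqrt(l\<^sup>2+m\<^sup>2)"
    and d: "d = sqrt (l\<^sup>2 + (m + h * s)\<^sup>2)" and nv: "nv \<ge> nu0" and nu0: "nu0>0" and rh: "r>h"
  shows "nu0*(r-h)/(r+h) \<le> nv/(-d)*l*(-l/r) + nv/(-d)*(m+h * s)*(-m/r)"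
proof -
  have r0: "r > 0" using h rh by linarith
  have d0: "d > 0" using l d by (simp add: add_pos_nonneg)
  have r2: "r\<^sup>2 = l\<^sup>2+m\<^sup>2" using r by simp
  have d2: "d\<^sup>2 = l\<^sup>2 + (m + h * s)\<^sup>2" using d by simp
  have mr: "\<bar>m\<bar> \<le> r" using r by (simp add: real_le_rsqrt)
  have "\<bar>m * h * s\<bar> \<le> r*h"
  proof -
    have "\<bar>m * h * s\<bar> = \<bar>m\<bar>*h * s" using h s by (simp add: abs_mult)
    also have "\<dots> \<le> r*h*1" using mr h s by (intro mult_mono) auto
    finally show ?thesis by simp
  qed
  hence mhs: "m * h * s \<ge> - r*h" by linarith
  define X where "X = l\<^sup>2+m\<^sup>2+m * h * s"
  have X: "X \<ge> r\<^sup>2 - r*h" using mhs r2 X_def by linarith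
  have Xp: "r\<^sup>2 - r*h > 0" using rh r0 by (simp add: power2_eq_square)
  have "d\<^sup>2 \<le> (r+h)\<^sup>2"
  proof -
    have "h * s*h * s \<le> h*h" using h s by (simp add: mult_le_one mult.assoc mult_left_le)
    hence "d\<^sup>2 \<le> r\<^sup>2 + 2*r*h + h*h" using d2 r2 mhs \<open>\<bar>m * h * s\<bar> \<le> r*h\<close>
      by (simp add: power2_eq_square algebra_simps)
    thus ?thesis by (simp add: power2_eq_square algebra_simps)
  qed
  hence drh: "d \<le> r+h" by (rule power2_le_imp_le) (use r0 h in linarith)
  have Xn: "X > 0" using X Xp by linarith
  have eq: "nv/(-d)*l*(-l/r) + nv/(-d)*(m+h * s)*(-m/r) = nv*X/(d*r)"
  proof -
    have "nv/(-d)*l*(-l/r) + nv/(-d)*(m+h * s)*(-m/r) = nv*(l*l+(m+h * s)*m)/(d*r)"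
      using d0 r0 by (simp add: divide_simps) (simp add: algebra_simps)
    also have "l*l+(m+h * s)*m = X" unfolding X_def by (simp add: power2_eq_square algebra_simps)
    finally show ?thesis .
  qed
  have "nu0*(r-h)/(r+h) = nu0*(r\<^sup>2-r*h)/((r+h)*r)" using r0 h
    by (simp add: divide_simps power2_eq_square) (simp add: algebra_simps)
  also have "\<dots> \<le> nu0*X/((r+h)*r)"
    apply (rule divide_right_mono[OF mult_left_mono[OF X]])
    using nu0 r0 h by auto
  also have "\<dots> \<le> nu0*X/(d*r)"
    apply (rule divide_left_mono)
    using drh r0 apply simp
    using nu0 Xn apply simp
    using r0 h d0 by simp
  also have "\<dots> \<le> nv*X/(d*r)"
    apply (rule divide_right_mono[OF mult_right_mono[OF nv]])
    using Xn d0 r0 by auto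
  finally show ?thesis using eq by simp
qed


lemma cs2: fixes a b x y :: real shows "a*x+b*y \<le> sqrt(a\<^sup>2+b\<^sup>2) * sqrt(x\<^sup>2+y\<^sup>2)"
proof (cases "a*x+b*y \<le> 0")
  case True
  have "0 \<le> sqrt(a\<^sup>2+b\<^sup>2) * sqrt(x\<^sup>2+y\<^sup>2)" by simp
  thus ?thesis using True by linarith
next
  case False
  have "(a*x+b*y)\<^sup>2 \<le> (a\<^sup>2+b\<^sup>2)*(x\<^sup>2+y\<^sup>2)"
  proof -
    have "(a\<^sup>2+b\<^sup>2)*(x\<^sup>2+y\<^sup>2) - (a*x+b*y)\<^sup>2 = (a*y-b*x)\<^sup>2" by (simp add: power2_eq_square algebra_simps)
    moreover have "(a*y-b*x)\<^sup>2 \<ge> 0" by simp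
    ultimately show ?thesis by linarith
  qed
  hence "a*x+b*y \<le> sqrt((a\<^sup>2+b\<^sup>2)*(x\<^sup>2+y\<^sup>2))" using False by (simp add: real_le_rsqrt)
  thus ?thesis by (simp add: real_sqrt_mult)
qed

theorem lemma4p6:
  fixes g a b N0 N1 nu0 nu1 :: real
    and nu :: "real \<Rightarrow> real"
    and gamma lam mu :: "nat \<Rightarrow> real"
  defines "\<delta> \<equiv> (\<lambda>n s. sqrt ((lam n)\<^sup>2 + (mu n + g * gamma n * s)\<^sup>2))"
  assumes g: "g > 0"
    and nu: "stretch_limiting nu N0 N1 nu0 nu1"
    and ab: "a > 0" "a\<^sup>2 + b\<^sup>2 < nu0\<^sup>2"
    and gamma_pos: "\<And>n. gamma n > 0"
    and gamma_lim: "gamma \<longlonglongrightarrow> 0"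
    and lam_neg: "\<And>n. lam n < 0"
    and eq_i: "\<And>n. ((\<lambda>s. nu (- \<delta> n s) / (- \<delta> n s) * lam n) has_integral a) {0..1}"
    and eq_k: "\<And>n. ((\<lambda>s. nu (- \<delta> n s) / (- \<delta> n s) * (mu n + g * gamma n * s))
                      has_integral b) {0..1}"
  shows "(\<lambda>n. sqrt ((lam n)\<^sup>2 + (mu n)\<^sup>2)) \<longlonglongrightarrow> 0"
proof -
  from nu have nu0p: "nu0 > 0" and N1: "N1 > 0" and lo: "\<forall>N\<le>N0. nu N = nu0"
    and mid: "\<forall>N\<in>{N0..N1}. nu N \<in> {nu0..nu1}" unfolding stretch_limiting_def by auto
  have nuge: "nu N \<ge> nu0" if "N \<le> 0" for N
  proof (cases "N \<le> N0")
    case True thus ?thesis using lo by simp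
  next
    case False thus ?thesis using mid that N1 by auto
  qed
  define A where "A = sqrt (a\<^sup>2+b\<^sup>2)"
  have A0: "A \<ge> 0" unfolding A_def by simp
  have AL: "A < nu0" unfolding A_def using ab(2) nu0p
    by (metis abs_of_pos real_sqrt_abs real_sqrt_less_mono)
  have bound: "sqrt ((lam n)\<^sup>2 + (mu n)\<^sup>2) * (nu0 - A) \<le> (g * gamma n) * (nu0 + A)" for n
  proof -
    define l m h r where "l = lam n" and "m = mu n" and "h = g * gamma n"
      and "r = sqrt ((lam n)\<^sup>2 + (mu n)\<^sup>2)"
    have h0: "h > 0" unfolding h_def using g gamma_pos by simp
    have r0: "r \<ge> 0" unfolding r_def by simp
    show ?thesis
    proof (cases "r > h")
      case False
      hence "r * (nu0 - A) \<le> h * (nu0 - A)" using AL by (intro mult_right_mono) auto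
      also have "\<dots> \<le> h * (nu0 + A)" using h0 A0 by (intro mult_left_mono) auto
      finally show ?thesis unfolding r_def h_def .
    next
      case True
      define K where "K = nu0*(r-h)/(r+h)"
      have int: "((\<lambda>s. nu (- \<delta> n s) / (- \<delta> n s) * lam n * (-l/r)
          + nu (- \<delta> n s) / (- \<delta> n s) * (mu n + g * gamma n * s) * (-m/r))
          has_integral (a*(-l/r) + b*(-m/r))) {0..1}"
        by (intro has_integral_add has_integral_mult_left eq_i eq_k)
      have "K \<le> a*(-l/r) + b*(-m/r)"
      proof (rule has_integral_le[OF _ int])
        show "((\<lambda>s::real. K) has_integral K) {0..1}" using has_integral_const_real[of K 0 1] by simp
        fix s :: real assume s: "s \<in> {0..1}"
        show "K \<le> nu (- \<delta> n s) / (- \<delta> n s) * lam n * (-l/r)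
          + nu (- \<delta> n s) / (- \<delta> n s) * (mu n + g * gamma n * s) * (-m/r)"
          unfolding K_def l_def m_def h_def
        proof (rule pw[where h="g * gamma n" and r=r and d="\<delta> n s" and nv="nu (- \<delta> n s)"])
          show "lam n < 0" by (rule lam_neg)
          show "g * gamma n > 0" using h0 unfolding h_def .
          show "0 \<le> s" "s \<le> 1" using s by auto
          show "r = sqrt ((lam n)\<^sup>2 + (mu n)\<^sup>2)" by (rule r_def)
          show "\<delta> n s = sqrt ((lam n)\<^sup>2 + (mu n + g * gamma n * s)\<^sup>2)" by (simp add: \<delta>_def)
          show "nu0 \<le> nu (- \<delta> n s)" by (rule nuge) (simp add: \<delta>_def)
          show "nu0 > 0" by (rule nu0p)
          show "g * gamma n < r" using True unfolding h_def .
        qed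
      qed
      also have "\<dots> = (a*(-l) + b*(-m))/r" by (simp add: divide_simps)
      also have "\<dots> \<le> A*r/r" unfolding A_def r_def l_def m_def
        apply (rule divide_right_mono)
        using cs2[of a "-lam n" b "-mu n"] by auto
      also have "\<dots> = A" using True h0 by simp
      finally have "nu0*(r-h)/(r+h) \<le> A" unfolding K_def .
      hence "nu0*(r-h) \<le> A*(r+h)" using True h0 by (simp add: pos_divide_le_eq)
      hence "r * (nu0 - A) \<le> h * (nu0 + A)" by (simp add: algebra_simps)
      thus ?thesis unfolding r_def h_def .
    qed
  qed
  define C where "C = g * (nu0 + A) / (nu0 - A)"
  have ub: "sqrt ((lam n)\<^sup>2 + (mu n)\<^sup>2) \<le> C * gamma n" for n
    using bound[of n] AL unfolding C_def by (simp add: pos_le_divide_eq mult_ac)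
  have "(\<lambda>n. C * gamma n) \<longlonglongrightarrow> C * 0" by (intro tendsto_mult tendsto_const gamma_lim)
  hence "(\<lambda>n. C * gamma n) \<longlonglongrightarrow> 0" by simp
  thus ?thesis
    by (rule tendsto_sandwich[rotated 2, OF tendsto_const]) (auto simp: ub)
qed

end
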